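(* Let $A\in\mathbb R^{n\times n}$ be Hurwitz and let $L\in\mathbb R^{n\times m}$ have full column rank. Then there exist right-invertible matrices $P$ and $\overline P$ (with $n$ columns) and right inverses $P^\dagger$, $\overline P^\dagger$ (i.e. $PP^\dagger=I$, $\overline P\,\overline P^\dagger=I$) such that (C1) $P^\dagger P+\overline P^\dagger\overline P=I_n$; (C2) $PAP^\dagger$ and $\overline PA\overline P^\dagger$ are Hurwitz; (C3) $PL=0$ and $\overline PL$ is (square and) nonsingular.
   Context: A square real matrix is Hurwitz (stable) if all its eigenvalues have negative real part. *)

theory Defs
  imports Complex_Main "Jordan_Normal_Form.Char_Poly" "Jordan_Normal_Form.DL_Rank"
begin

definition hurwitz :: "real mat \<Rightarrow> bool" where
  "hurwitz A \<longleftrightarrow> A \<in> carrier_mat (dim_row A) (dim_row A) \<and>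
     (\<forall>ev. eigenvalue (map_mat complex_of_real A) ev \<longrightarrow> Re ev < 0)"

end

theory Submission
  imports Defs "Jordan_Normal_Form.Schur_Decomposition" "Jordan_Normal_Form.Matrix_Kernel"
begin

abbreviation cm :: "real mat \<Rightarrow> complex mat" where "cm \<equiv> map_mat complex_of_real"

lemma conj_real_mult_vec:
  fixes V :: "real mat" and a :: "complex vec"
  assumes "V \<in> carrier_mat n r" "a \<in> carrier_vec r"
  shows "conjugate (cm V *\<^sub>v a) = cm V *\<^sub>v conjugate a"
  using assms
  by (intro eq_vecI, auto simp: mult_mat_vec_def scalar_prod_def sum_conjugate conjugate_dist_mul)

lemma inj_complex:
  fixes V :: "real mat"
  assumes V: "V \<in> carrier_mat n r"
    and inj: "\<And>a. a \<in> carrier_vec r \<Longrightarrow> V *\<^sub>v a = 0\<^sub>v n \<Longrightarrow> a = 0\<^sub>v r"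
    and a: "a \<in> carrier_vec r" and z: "cm V *\<^sub>v a = 0\<^sub>v n"
  shows "a = 0\<^sub>v r"
proof -
  define ar where "ar = map_vec Re a"
  define ai where "ai = map_vec Im a"
  have ar: "ar \<in> carrier_vec r" "ai \<in> carrier_vec r" using a by (auto simp: ar_def ai_def)
  have "V *\<^sub>v ar = 0\<^sub>v n"
  proof (rule eq_vecI)
    fix i assume i: "i < dim_vec (0\<^sub>v n :: real vec)"
    have "Re ((cm V *\<^sub>v a) $ i) = 0" using z i by simp
    thus "(V *\<^sub>v ar) $ i = 0\<^sub>v n $ i" using i V a
      by (auto simp: mult_mat_vec_def scalar_prod_def ar_def Re_sum)
  qed (insert V, auto)
  hence r0: "ar = 0\<^sub>v r" using inj ar by auto
  have "V *\<^sub>v ai = 0\<^sub>v n"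
  proof (rule eq_vecI)
    fix i assume i: "i < dim_vec (0\<^sub>v n :: real vec)"
    have "Im ((cm V *\<^sub>v a) $ i) = 0" using z i by simp
    thus "(V *\<^sub>v ai) $ i = 0\<^sub>v n $ i" using i V a
      by (auto simp: mult_mat_vec_def scalar_prod_def ai_def Im_sum)
  qed (insert V, auto)
  hence i0: "ai = 0\<^sub>v r" using inj ar by auto
  show ?thesis
  proof (rule eq_vecI)
    fix i assume i: "i < dim_vec (0\<^sub>v r :: complex vec)"
    have ia: "i < dim_vec a" using i a by simp
    have "ar $ i = 0" "ai $ i = 0" using r0 i0 i by auto
    hence "Re (a $ i) = 0" "Im (a $ i) = 0" using ia unfolding ar_def ai_def by auto
    thus "a $ i = 0\<^sub>v r $ i" using i by (simp add: complex_eq_iff)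
  qed (insert a, auto)
qed

lemma compress:
  fixes X A V Wi :: "real mat"
  assumes X: "X \<in> carrier_mat n n" and A: "A \<in> carrier_mat n n"
    and V: "V \<in> carrier_mat n r" and Wi: "Wi \<in> carrier_mat r r"
    and WWi: "(V\<^sup>T * X * V) * Wi = 1\<^sub>m r"
    and inj: "\<And>a. a \<in> carrier_vec r \<Longrightarrow> V *\<^sub>v a = 0\<^sub>v n \<Longrightarrow> a = 0\<^sub>v r"
    and pos: "\<And>y. y \<in> carrier_vec n \<Longrightarrow> y \<noteq> 0\<^sub>v n \<Longrightarrow> conjugate y \<bullet> (cm X *\<^sub>v y) > 0"
    and neg: "\<And>y. y \<in> carrier_vec n \<Longrightarrow> y \<noteq> 0\<^sub>v n \<Longrightarrow> Re (conjugate y \<bullet> (cm X *\<^sub>v (cm A *\<^sub>v y))) < 0"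
  shows "hurwitz (Wi * V\<^sup>T * X * A * V)"
  unfolding hurwitz_def
proof (intro conjI allI impI)
  let ?M = "Wi * V\<^sup>T * X * A * V"
  have M: "?M \<in> carrier_mat r r" using X A V Wi by auto
  thus "?M \<in> carrier_mat (dim_row ?M) (dim_row ?M)" using Wi by auto
  fix ev assume "eigenvalue (cm ?M) ev"
  then obtain v where v: "v \<in> carrier_vec r" "v \<noteq> 0\<^sub>v r" and ev: "cm ?M *\<^sub>v v = ev \<cdot>\<^sub>v v"
    unfolding eigenvalue_def eigenvector_def using M by auto
  have Xc: "cm X \<in> carrier_mat n n" and Ac: "cm A \<in> carrier_mat n n" and Vc: "cm V \<in> carrier_mat n r"
    and Wic: "cm Wi \<in> carrier_mat r r" and VTc: "cm (V\<^sup>T) \<in> carrier_mat r n" using X A V Wi by auto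
  define y where "y = cm V *\<^sub>v v"
  have y: "y \<in> carrier_vec n" using Vc v by (simp add: y_def)
  have y0: "y \<noteq> 0\<^sub>v n" using inj_complex[OF V inj v(1)] v(2) by (auto simp: y_def)
  have c1: "cm (Wi * V\<^sup>T) = cm Wi * cm (V\<^sup>T)" 
    by (rule of_real_hom.mat_hom_mult, insert Wi V, auto)
  have c2: "cm (Wi * V\<^sup>T * X) = cm (Wi * V\<^sup>T) * cm X" 
    by (rule of_real_hom.mat_hom_mult, insert Wi V X, auto)
  have c3: "cm (Wi * V\<^sup>T * X * A) = cm (Wi * V\<^sup>T * X) * cm A" 
    by (rule of_real_hom.mat_hom_mult, insert Wi V X A, auto)
  have c4: "cm (Wi * V\<^sup>T * X * A * V) = cm (Wi * V\<^sup>T * X * A) * cm V" 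
    by (rule of_real_hom.mat_hom_mult, insert Wi V X A, auto)
  have Mc: "cm ?M = cm Wi * cm (V\<^sup>T) * cm X * cm A * cm V"
    unfolding c4 c3 c2 c1 ..
  have Wc: "cm (V\<^sup>T * X * V) * cm Wi = 1\<^sub>m r" 
  proof -
    have "cm (V\<^sup>T * X * V * Wi) = cm (V\<^sup>T * X * V) * cm Wi"
      by (rule of_real_hom.mat_hom_mult, insert X V Wi, auto)
    thus ?thesis unfolding WWi by (simp add: of_real_hom.mat_hom_one)
  qed
  have d1: "cm (V\<^sup>T * X) = cm (V\<^sup>T) * cm X" 
    by (rule of_real_hom.mat_hom_mult, insert V X, auto)
  have d2: "cm (V\<^sup>T * X * V) = cm (V\<^sup>T * X) * cm V" 
    by (rule of_real_hom.mat_hom_mult, insert V X, auto)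
  have Wc': "cm (V\<^sup>T * X * V) = cm (V\<^sup>T) * cm X * cm V"
    unfolding d2 d1 ..
  define w where "w = cm X *\<^sub>v (cm A *\<^sub>v y)"
  have w: "w \<in> carrier_vec n" using Xc Ac y by (simp add: w_def)
  have WV: "cm Wi * cm (V\<^sup>T) \<in> carrier_mat r n" using Wic VTc by auto
  have WVX: "cm Wi * cm (V\<^sup>T) * cm X \<in> carrier_mat r n" using WV Xc by auto
  have WVXA: "cm Wi * cm (V\<^sup>T) * cm X * cm A \<in> carrier_mat r n" using WVX Ac by auto
  have "cm ?M *\<^sub>v v = (cm Wi * cm (V\<^sup>T) * cm X * cm A) *\<^sub>v y"
    unfolding Mc y_def by (rule assoc_mult_mat_vec[OF WVXA Vc v(1)])
  also have "\<dots> = (cm Wi * cm (V\<^sup>T) * cm X) *\<^sub>v (cm A *\<^sub>v y)"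
    by (rule assoc_mult_mat_vec[OF WVX Ac y])
  also have "\<dots> = (cm Wi * cm (V\<^sup>T)) *\<^sub>v w"
    unfolding w_def by (rule assoc_mult_mat_vec[OF WV Xc], insert Ac y, auto)
  also have "\<dots> = cm Wi *\<^sub>v (cm (V\<^sup>T) *\<^sub>v w)"
    by (rule assoc_mult_mat_vec[OF Wic VTc w])
  finally have "cm ?M *\<^sub>v v = cm Wi *\<^sub>v (cm (V\<^sup>T) *\<^sub>v w)" .
  hence e1: "cm Wi *\<^sub>v (cm (V\<^sup>T) *\<^sub>v w) = ev \<cdot>\<^sub>v v" using ev by simp
  have Wcar: "cm (V\<^sup>T * X * V) \<in> carrier_mat r r" using V X by auto
  have "cm (V\<^sup>T * X * V) *\<^sub>v (cm Wi *\<^sub>v (cm (V\<^sup>T) *\<^sub>v w)) 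
     = (cm (V\<^sup>T * X * V) * cm Wi) *\<^sub>v (cm (V\<^sup>T) *\<^sub>v w)"
    by (rule assoc_mult_mat_vec[symmetric, OF Wcar Wic], insert VTc w, auto)
  also have "\<dots> = cm (V\<^sup>T) *\<^sub>v w" unfolding Wc by (rule one_mult_mat_vec, insert VTc w, auto)
  finally have m1: "cm (V\<^sup>T * X * V) *\<^sub>v (cm Wi *\<^sub>v (cm (V\<^sup>T) *\<^sub>v w)) = cm (V\<^sup>T) *\<^sub>v w" .
  have VX: "cm (V\<^sup>T) * cm X \<in> carrier_mat r n" using VTc Xc by auto
  have "cm (V\<^sup>T * X * V) *\<^sub>v (ev \<cdot>\<^sub>v v) = ev \<cdot>\<^sub>v (cm (V\<^sup>T * X * V) *\<^sub>v v)"
    by (rule mult_mat_vec[OF Wcar v(1)])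
  also have "cm (V\<^sup>T * X * V) *\<^sub>v v = (cm (V\<^sup>T) * cm X) *\<^sub>v y"
    unfolding Wc' y_def by (rule assoc_mult_mat_vec[OF VX Vc v(1)])
  also have "\<dots> = cm (V\<^sup>T) *\<^sub>v (cm X *\<^sub>v y)" by (rule assoc_mult_mat_vec[OF VTc Xc y])
  finally have m2: "cm (V\<^sup>T * X * V) *\<^sub>v (ev \<cdot>\<^sub>v v) = ev \<cdot>\<^sub>v (cm (V\<^sup>T) *\<^sub>v (cm X *\<^sub>v y))" .
  have e2: "cm (V\<^sup>T) *\<^sub>v w = ev \<cdot>\<^sub>v (cm (V\<^sup>T) *\<^sub>v (cm X *\<^sub>v y))" 
  proof -
    have "cm (V\<^sup>T) *\<^sub>v w = cm (V\<^sup>T * X * V) *\<^sub>v (ev \<cdot>\<^sub>v v)" using m1 unfolding e1 by (rule sym)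
    thus ?thesis unfolding m2 .
  qed
  have key: "conjugate v \<bullet> (cm (V\<^sup>T) *\<^sub>v u) = conjugate y \<bullet> u" if u: "u \<in> carrier_vec n" for u
  proof -
    have cy: "conjugate y = cm V *\<^sub>v conjugate v" unfolding y_def by (rule conj_real_mult_vec[OF V v(1)])
    have tt: "cm V = (cm (V\<^sup>T))\<^sup>T" by (simp add: map_mat_transpose)
    have "conjugate y \<bullet> u = ((cm (V\<^sup>T))\<^sup>T *\<^sub>v conjugate v) \<bullet> u" unfolding cy by (simp only: tt[symmetric])
    also have "\<dots> = conjugate v \<bullet> (cm (V\<^sup>T) *\<^sub>v u)"
      by (rule transpose_vec_mult_scalar[OF VTc u], insert v, simp)
    finally show ?thesis by (rule sym)
  qed
  define q where "q = conjugate y \<bullet> (cm X *\<^sub>v y)"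
  have q: "q > 0" unfolding q_def using pos[OF y y0] .
  have cv: "conjugate v \<in> carrier_vec r" using v by simp
  have "conjugate v \<bullet> (cm (V\<^sup>T) *\<^sub>v w) = conjugate v \<bullet> (ev \<cdot>\<^sub>v (cm (V\<^sup>T) *\<^sub>v (cm X *\<^sub>v y)))"
    unfolding e2 ..
  also have "\<dots> = ev * (conjugate v \<bullet> (cm (V\<^sup>T) *\<^sub>v (cm X *\<^sub>v y)))"
    by (rule scalar_prod_smult_distrib[OF cv], insert VTc Xc y, auto)
  finally have "conjugate y \<bullet> w = ev * q"
    unfolding q_def key[OF w] key[OF mult_mat_vec_carrier[OF Xc y]] .
  hence "Re (ev * q) < 0" using neg[OF y y0] unfolding w_def by simp
  moreover have iq: "Im q = 0" and rq: "Re q > 0" using q by (auto simp: less_complex_def)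
  ultimately have "Re ev * Re q < 0" by simp
  thus "Re ev < 0" using rq by (meson mult_nonneg_nonneg not_le less_imp_le)
qed


lemma inv_exists:
  fixes W :: "'a::field mat"
  assumes W: "W \<in> carrier_mat r r"
    and inj: "\<And>a. a \<in> carrier_vec r \<Longrightarrow> W *\<^sub>v a = 0\<^sub>v r \<Longrightarrow> a = 0\<^sub>v r"
  shows "\<exists>Wi. Wi \<in> carrier_mat r r \<and> W * Wi = 1\<^sub>m r \<and> Wi * W = 1\<^sub>m r"
proof -
  have "det W \<noteq> 0" using det_0_iff_vec_prod_zero_field[OF W] inj by auto
  from det_non_zero_imp_unit[OF W this, unfolded Units_def, of "()"]
  show ?thesis by (auto simp: ring_mat_def)
qed

lemma mat_eq_vec:
  fixes A B :: "'a::field mat"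
  assumes A: "A \<in> carrier_mat n k" and B: "B \<in> carrier_mat n k"
    and eq: "\<And>x. x \<in> carrier_vec k \<Longrightarrow> A *\<^sub>v x = B *\<^sub>v x"
  shows "A = B"
proof (rule eq_matI)
  fix i j assume i: "i < dim_row B" and j: "j < dim_col B"
  have "(A *\<^sub>v unit_vec k j) $ i = (B *\<^sub>v unit_vec k j) $ i" using eq[of "unit_vec k j"] by simp
  thus "A $$ (i, j) = B $$ (i, j)" using A B i j by (simp add: mult_mat_vec_def row_def)
qed (insert A B, auto)

lemma L_inj:
  fixes L :: "'a::field mat"
  assumes L: "L \<in> carrier_mat n m" and rk: "vec_space.rank n L = m"
    and b: "b \<in> carrier_vec m" and z: "L *\<^sub>v b = 0\<^sub>v n"
  shows "b = 0\<^sub>v m"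
proof -
  interpret vec_space "TYPE('a)" n .
  have dist: "distinct (cols L)"
  proof (rule ccontr)
    assume nd: "\<not> distinct (cols L)"
    have e: "{} \<subseteq> set (cols L) \<and> lin_indpt {}"
      by (metis (no_types) empty_subsetI fin_dim finite_basis_exists subset_li_is_li vec_vs vectorspace.basis_def)
    obtain S where S: "maximal S (\<lambda>T. T \<subseteq> set (cols L) \<and> lin_indpt T)"
      using maximal_exists_superset[of "set (cols L)" "\<lambda>T. T \<subseteq> set (cols L) \<and> lin_indpt T" "{}"] e by auto
    have "rank L = card S" by (rule rank_card_indpt[OF L S])
    also have "\<dots> \<le> card (set (cols L))" using S by (simp add: card_mono maximal_def)
    also have "\<dots> < length (cols L)" using nd card_distinct[of "cols L"] card_length[of "cols L"] by linarith
    also have "\<dots> = m" using L by simp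
    finally show False using rk by simp
  qed
  have li: "lin_indpt (set (cols L))" by (rule full_rank_lin_indpt[OF L rk dist])
  show ?thesis
  proof (rule ccontr)
    assume "b \<noteq> 0\<^sub>v m"
    from lin_depI[OF L b this z dist] li show False by simp
  qed
qed

lemma kernel_V:
  fixes M :: "'a::field mat"
  assumes M: "M \<in> carrier_mat r n"
  shows "\<exists>k V. V \<in> carrier_mat n k \<and> M * V = 0\<^sub>m r k \<and>
     (\<forall>a \<in> carrier_vec k. V *\<^sub>v a = 0\<^sub>v n \<longrightarrow> a = 0\<^sub>v k) \<and>
     (\<forall>u \<in> carrier_vec n. M *\<^sub>v u = 0\<^sub>v r \<longrightarrow> (\<exists>a \<in> carrier_vec k. u = V *\<^sub>v a))"
proof -
  obtain B where B: "finite B" "kernel.basis n M B" using kernel_basis_exists[OF M] by auto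
  interpret K: kernel r n M by (unfold_locales, rule M)
  have Bk: "B \<subseteq> mat_kernel M" and li: "K.lin_indpt B" and sp: "K.span B = mat_kernel M"
    using B(2) unfolding K.Ker.basis_def by auto
  have li': "\<not> K.NC.lin_dep B" using li K.lindep_same[OF Bk] by simp
  have sp': "K.NC.span B = mat_kernel M" using sp K.span_same[OF Bk] by simp
  obtain bs where bs: "distinct bs" "set bs = B" using finite_distinct_list[OF B(1)] by auto
  have Bc: "B \<subseteq> carrier_vec n" using Bk mat_kernel_carrier[OF M] by auto
  define V where "V = mat_of_cols n bs"
  define k where "k = length bs"
  have V: "V \<in> carrier_mat n k" unfolding V_def k_def by simp
  have cV: "cols V = bs" unfolding V_def using Bc bs by simp
  show ?thesis
  proof (intro exI conjI ballI impI)
    show "V \<in> carrier_mat n k" by fact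
    show "M * V = 0\<^sub>m r k"
    proof (rule eq_matI)
      fix i j assume i: "i < dim_row (0\<^sub>m r k :: 'a mat)" and j: "j < dim_col (0\<^sub>m r k :: 'a mat)"
      have "col V j \<in> B" using cV bs j V by (metis carrier_matD(2) cols_length cols_nth index_zero_mat(3) nth_mem)
      hence "M *\<^sub>v col V j = 0\<^sub>v r" using Bk mat_kernelD[OF M] by auto
      hence "(M *\<^sub>v col V j) $ i = 0" using i by simp
      thus "(M * V) $$ (i, j) = 0\<^sub>m r k $$ (i, j)" using i j M V by (simp add: mult_mat_vec_def)
    qed (insert M V, auto)
    fix a assume a: "a \<in> carrier_vec k" and z: "V *\<^sub>v a = 0\<^sub>v n"
    show "a = 0\<^sub>v k"
    proof (rule ccontr)
      assume "a \<noteq> 0\<^sub>v k"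
      from K.NC.lin_depI[OF V a this z] cV bs li' show False by simp
    qed
  next
    fix u assume u: "u \<in> carrier_vec n" and z: "M *\<^sub>v u = 0\<^sub>v r"
    have "u \<in> mat_kernel M" using mat_kernelI[OF M u z] .
    hence "u \<in> K.NC.span (set bs)" using sp' bs by simp
    hence "u \<in> K.NC.span_list bs" using K.NC.span_list_as_span[of bs] Bc bs by simp
    then obtain c where "u = K.NC.lincomb_list c bs" unfolding K.NC.span_list_def by auto
    also have "\<dots> = V *\<^sub>v vec k c" unfolding V_def k_def
      by (rule K.NC.lincomb_list_as_mat_mult, insert Bc bs, auto)
    finally show "\<exists>a \<in> carrier_vec k. u = V *\<^sub>v a" by auto
  qed
qed


lemma sum_sq_pos:
  fixes z :: "complex vec"
  assumes z: "z \<in> carrier_vec n" "z \<noteq> 0\<^sub>v n"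
  shows "(\<Sum>i<n. (cmod (z $ i))\<^sup>2) > 0"
proof -
  obtain i where i: "i < n" "z $ i \<noteq> 0" using z by (metis eq_vecI carrier_vecD index_zero_vec(1) index_zero_vec(2))
  have "(cmod (z $ i))\<^sup>2 \<le> (\<Sum>i<n. (cmod (z $ i))\<^sup>2)"
    by (rule member_le_sum, insert i, auto)
  moreover have "(cmod (z $ i))\<^sup>2 > 0" using i by simp
  ultimately show ?thesis by linarith
qed

lemma double_sum_bound:
  fixes f :: "nat \<Rightarrow> real"
  shows "(\<Sum>i<n. \<Sum>j<n. f i * f j) \<le> real n * (\<Sum>i<n. (f i)\<^sup>2)"
proof -
  have "(\<Sum>i<n. \<Sum>j<n. f i * f j) \<le> (\<Sum>i<n. \<Sum>j<n. ((f i)\<^sup>2 + (f j)\<^sup>2) / 2)"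
  proof (intro sum_mono)
    fix i j
    have "0 \<le> (f i - f j)\<^sup>2" by simp
    thus "f i * f j \<le> ((f i)\<^sup>2 + (f j)\<^sup>2) / 2" by (simp add: power2_eq_square algebra_simps)
  qed
  also have "\<dots> = (\<Sum>i<n. \<Sum>j<n. (f i)\<^sup>2 / 2) + (\<Sum>i<n. \<Sum>j<n. (f j)\<^sup>2 / 2)"
    by (simp add: add_divide_distrib sum.distrib)
  also have "\<dots> = real n * (\<Sum>i<n. (f i)\<^sup>2)"
    by (simp add: sum_divide_distrib[symmetric] sum_distrib_left[symmetric])
  finally show ?thesis .
qed

lemma tri_neg:
  fixes B :: "complex mat"
  assumes B: "B \<in> carrier_mat n n" and ut: "upper_triangular B"
    and d: "\<And>i. i < n \<Longrightarrow> Re (B $$ (i,i)) < 0"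
  shows "\<exists>\<epsilon>>0. \<forall>z\<in>carrier_vec n. z \<noteq> 0\<^sub>v n \<longrightarrow>
     Re (conjugate z \<bullet> (mat n n (\<lambda>(i,j). B $$ (i,j) * of_real (\<epsilon>^(j-i))) *\<^sub>v z)) < 0"
proof (cases "n = 0")
  case True
  show ?thesis by (rule exI[of _ 1], insert True, auto)
next
  case False
  define c where "c = Min ((\<lambda>i. - Re (B $$ (i,i))) ` {..<n})"
  have c: "c > 0" unfolding c_def using False d by (subst Min_gr_iff, auto)
  have ci: "c \<le> - Re (B $$ (i,i))" if "i < n" for i unfolding c_def using that by (intro Min_le, auto)
  define K where "K = (\<Sum>i<n. \<Sum>j<n. cmod (B $$ (i,j)))"
  have K0: "K \<ge> 0" unfolding K_def by (intro sum_nonneg, auto)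
  have Kij: "cmod (B $$ (i,j)) \<le> K" if "i < n" "j < n" for i j
  proof -
    have "cmod (B $$ (i,j)) \<le> (\<Sum>j<n. cmod (B $$ (i,j)))" by (rule member_le_sum, insert that, auto)
    also have "\<dots> \<le> K" unfolding K_def by (rule member_le_sum[of _ _ "\<lambda>i. (\<Sum>j<n. cmod (B $$ (i,j)))"], insert that, auto intro: sum_nonneg)
    finally show ?thesis .
  qed
  define \<epsilon> where "\<epsilon> = min 1 (c / (2 * (K * real n + 1)))"
  have e0: "\<epsilon> > 0" unfolding \<epsilon>_def using c K0 by (auto intro!: divide_pos_pos add_nonneg_pos)
  have e1: "\<epsilon> \<le> 1" unfolding \<epsilon>_def by simp
  have eK: "\<epsilon> * K * real n \<le> c / 2"
  proof -
    have "\<epsilon> \<le> c / (2 * (K * real n + 1))" unfolding \<epsilon>_def by simp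
    hence "\<epsilon> * (K * real n) \<le> c / (2 * (K * real n + 1)) * (K * real n)" 
      using K0 by (intro mult_right_mono, auto)
    also have "\<dots> \<le> c / 2"
    proof -
      have "c / (2 * (K * real n + 1)) * (K * real n) = c / 2 * ((K * real n) / (K * real n + 1))" by simp
      also have "\<dots> \<le> c / 2 * 1"
      proof (rule mult_left_mono)
        have "K * real n \<ge> 0" using K0 by simp
        thus "K * real n / (K * real n + 1) \<le> 1" by (simp add: divide_le_eq)
      qed (insert c, auto)
      finally show ?thesis by simp
    qed
    finally show ?thesis by (simp add: mult.assoc)
  qed
  show ?thesis
  proof (intro exI[of _ \<epsilon>] conjI e0 ballI impI)
    fix z :: "complex vec" assume z: "z \<in> carrier_vec n" and z0: "z \<noteq> 0\<^sub>v n"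
    define Be where "Be = mat n n (\<lambda>(i,j). B $$ (i,j) * of_real (\<epsilon>^(j-i)))"
    define S where "S = (\<Sum>i<n. (cmod (z $ i))\<^sup>2)"
    have S: "S > 0" unfolding S_def by (rule sum_sq_pos[OF z z0])
    have expand: "conjugate z \<bullet> (Be *\<^sub>v z) = (\<Sum>i<n. \<Sum>j<n. cnj (z $ i) * Be $$ (i,j) * z $ j)"
      using z unfolding Be_def by (simp add: scalar_prod_def mult_mat_vec_def sum_distrib_left mult.assoc lessThan_atLeast0)
    have tm: "Re (cnj (z $ i) * Be $$ (i,j) * z $ j) \<le> (if i = j then - c * (cmod (z $ i))\<^sup>2 else 0) + \<epsilon> * K * (cmod (z $ i) * cmod (z $ j))"
      if i: "i < n" and j: "j < n" for i j
    proof -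
      have nn: "0 \<le> \<epsilon> * K * (cmod (z $ i) * cmod (z $ j))" using e0 K0 by simp
      consider "i = j" | "j < i" | "i < j" by linarith
      thus ?thesis
      proof cases
        case 1
        have sq: "cnj (z $ i) * z $ i = of_real ((cmod (z $ i))\<^sup>2)" by (metis complex_norm_square mult.commute)
        have "cnj (z $ i) * Be $$ (i,j) * z $ j = B $$ (i,i) * (cnj (z $ i) * z $ i)"
          using i 1 unfolding Be_def by (simp add: algebra_simps)
        also have "\<dots> = B $$ (i,i) * of_real ((cmod (z $ i))\<^sup>2)" by (simp only: sq)
        finally have "Re (cnj (z $ i) * Be $$ (i,j) * z $ j) = Re (B $$ (i,i)) * (cmod (z $ i))\<^sup>2" 
          by simp
        also have "\<dots> \<le> - c * (cmod (z $ i))\<^sup>2" using ci[OF i] by (intro mult_right_mono, auto)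
        finally show ?thesis using 1 nn by simp
      next
        case 2
        hence "B $$ (i,j) = 0" using ut B i unfolding upper_triangular_def by auto
        thus ?thesis using 2 nn i j unfolding Be_def by simp
      next
        case 3
        have "\<epsilon>^(j-i) \<le> \<epsilon>^1" by (rule power_decreasing, insert 3 e0 e1, auto)
        hence pe: "\<epsilon>^(j-i) \<le> \<epsilon>" by simp
        have "Re (cnj (z $ i) * Be $$ (i,j) * z $ j) \<le> cmod (cnj (z $ i) * Be $$ (i,j) * z $ j)" by (rule complex_Re_le_cmod)
        also have "\<dots> = cmod (z $ i) * (cmod (B $$ (i,j)) * \<epsilon>^(j-i)) * cmod (z $ j)"
          using i j e0 unfolding Be_def by (simp add: norm_mult norm_power)
        also have "\<dots> \<le> cmod (z $ i) * (K * \<epsilon>) * cmod (z $ j)"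
          by (intro mult_right_mono mult_left_mono mult_mono Kij i j pe, insert K0 e0, auto)
        finally show ?thesis using 3 by (simp add: algebra_simps)
      qed
    qed
    have "Re (conjugate z \<bullet> (Be *\<^sub>v z)) = (\<Sum>i<n. \<Sum>j<n. Re (cnj (z $ i) * Be $$ (i,j) * z $ j))"
      unfolding expand by (simp add: Re_sum)
    also have "\<dots> \<le> (\<Sum>i<n. \<Sum>j<n. (if i = j then - c * (cmod (z $ i))\<^sup>2 else 0) + \<epsilon> * K * (cmod (z $ i) * cmod (z $ j)))"
      by (intro sum_mono tm, auto)
    also have "\<dots> = (\<Sum>i<n. - c * (cmod (z $ i))\<^sup>2) + \<epsilon> * K * (\<Sum>i<n. \<Sum>j<n. cmod (z $ i) * cmod (z $ j))"
      by (simp add: sum.distrib sum_distrib_left sum_subtractf sum_negf)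
    also have "\<dots> \<le> (\<Sum>i<n. - c * (cmod (z $ i))\<^sup>2) + \<epsilon> * K * (real n * S)"
      unfolding S_def using e0 K0 by (intro add_left_mono mult_left_mono double_sum_bound, auto)
    also have "\<dots> = - c * S + (\<epsilon> * K * real n) * S" unfolding S_def by (simp add: sum_distrib_left mult.assoc)
    also have "\<dots> \<le> - c * S + (c / 2) * S" using eK S by (intro add_left_mono mult_right_mono, auto)
    also have "\<dots> < 0" using c S by (simp add: algebra_simps)
    finally show "Re (conjugate z \<bullet> (mat n n (\<lambda>(i,j). B $$ (i,j) * of_real (\<epsilon>^(j-i))) *\<^sub>v z)) < 0"
      unfolding Be_def .
  qed
qed


lemma conj_mult_vec:
  fixes R :: "complex mat"
  assumes "R \<in> carrier_mat n k" "y \<in> carrier_vec k"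
  shows "conjugate (R *\<^sub>v y) = map_mat cnj R *\<^sub>v conjugate y"
  using assms
  by (intro eq_vecI, auto simp: mult_mat_vec_def scalar_prod_def sum_conjugate conjugate_dist_mul)

lemma adj:
  fixes R :: "complex mat"
  assumes R: "R \<in> carrier_mat n n" and y: "y \<in> carrier_vec n" and w: "w \<in> carrier_vec n"
  shows "conjugate y \<bullet> ((map_mat cnj R)\<^sup>T *\<^sub>v w) = conjugate (R *\<^sub>v y) \<bullet> w"
proof -
  have Rh: "(map_mat cnj R)\<^sup>T \<in> carrier_mat n n" using R by simp
  have "((map_mat cnj R)\<^sup>T\<^sup>T *\<^sub>v conjugate y) \<bullet> w = conjugate y \<bullet> ((map_mat cnj R)\<^sup>T *\<^sub>v w)"
    by (rule transpose_vec_mult_scalar[OF Rh w], insert y, simp)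
  moreover have "(map_mat cnj R)\<^sup>T\<^sup>T *\<^sub>v conjugate y = conjugate (R *\<^sub>v y)"
    using conj_mult_vec[OF R y] by simp
  ultimately show ?thesis by simp
qed

lemma qf_re:
  fixes G :: "complex mat"
  assumes G: "G \<in> carrier_mat n n" and y: "y \<in> carrier_vec n"
  shows "conjugate y \<bullet> (cm (map_mat Re G) *\<^sub>v y) = (conjugate y \<bullet> (G *\<^sub>v y) + cnj (y \<bullet> (G *\<^sub>v conjugate y))) / 2"
proof -
  have t: "cnj (y $ i) * (complex_of_real (Re (G $$ (i,j))) * y $ j) = 
     (cnj (y $ i) * (G $$ (i,j) * y $ j) + cnj (y $ i * (G $$ (i,j) * cnj (y $ j)))) / 2" for i j
  proof -
    have "complex_of_real (Re (G $$ (i,j))) = (G $$ (i,j) + cnj (G $$ (i,j))) / 2"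
      by (simp add: complex_add_cnj)
    thus ?thesis by (simp add: algebra_simps add_divide_distrib)
  qed
  have "conjugate y \<bullet> (cm (map_mat Re G) *\<^sub>v y) = (\<Sum>i<n. \<Sum>j<n. cnj (y $ i) * (complex_of_real (Re (G $$ (i,j))) * y $ j))"
    using G y by (simp add: scalar_prod_def mult_mat_vec_def sum_distrib_left lessThan_atLeast0)
  also have "\<dots> = (\<Sum>i<n. \<Sum>j<n. (cnj (y $ i) * (G $$ (i,j) * y $ j) + cnj (y $ i * (G $$ (i,j) * cnj (y $ j)))) / 2)"
    unfolding t ..
  also have "\<dots> = ((\<Sum>i<n. \<Sum>j<n. cnj (y $ i) * (G $$ (i,j) * y $ j)) + cnj (\<Sum>i<n. \<Sum>j<n. y $ i * (G $$ (i,j) * cnj (y $ j)))) / 2"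
    by (simp add: sum_divide_distrib[symmetric] sum.distrib cnj_sum add_divide_distrib)
  also have "\<dots> = (conjugate y \<bullet> (G *\<^sub>v y) + cnj (y \<bullet> (G *\<^sub>v conjugate y))) / 2"
    using G y by (simp add: scalar_prod_def mult_mat_vec_def sum_distrib_left lessThan_atLeast0)
  finally show ?thesis .
qed

lemma re_mult:
  fixes H :: "complex mat" and A :: "real mat"
  assumes H: "H \<in> carrier_mat n n" and A: "A \<in> carrier_mat n n"
  shows "map_mat Re H * A = map_mat Re (H * cm A)"
  using H A by (intro eq_matI, auto simp: scalar_prod_def Re_sum)

lemma poly_prod_root: "(x::complex) \<in> set es \<Longrightarrow> poly (\<Prod>a\<leftarrow>es. [:-a, 1:]) x = 0"
proof (induct es)
  case (Cons a es)
  thus ?case by (cases "x = a", auto)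
qed simp


lemma lyap:
  fixes A :: "real mat"
  assumes A: "A \<in> carrier_mat n n" and h: "hurwitz A"
  shows "\<exists>X. X \<in> carrier_mat n n \<and> X\<^sup>T = X \<and>
    (\<forall>y\<in>carrier_vec n. y \<noteq> 0\<^sub>v n \<longrightarrow> conjugate y \<bullet> (cm X *\<^sub>v y) > 0) \<and>
    (\<forall>y\<in>carrier_vec n. y \<noteq> 0\<^sub>v n \<longrightarrow> Re (conjugate y \<bullet> (cm X *\<^sub>v (cm A *\<^sub>v y))) < 0)"
proof -
  define Ac where "Ac = cm A"
  have Ac: "Ac \<in> carrier_mat n n" using A by (simp add: Ac_def)
  obtain es where es: "char_poly Ac = (\<Prod>a\<leftarrow>es. [:-a,1:])" using char_poly_factorized[OF Ac] by auto
  obtain B P Q where sd: "schur_decomposition Ac es = (B,P,Q)" by (cases "schur_decomposition Ac es", auto)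
  from schur_decomposition[OF Ac es sd] have sim: "similar_mat_wit Ac B P Q" 
    and ut: "upper_triangular B" and dg: "diag_mat B = es" by auto
  from sim Ac have B: "B \<in> carrier_mat n n" and P: "P \<in> carrier_mat n n" and Q: "Q \<in> carrier_mat n n"
    and PQ: "P * Q = 1\<^sub>m n" and QP: "Q * P = 1\<^sub>m n" and AcPBQ: "Ac = P * B * Q"
    unfolding similar_mat_wit_def Let_def by auto
  have dneg: "Re (B $$ (i,i)) < 0" if i: "i < n" for i
  proof -
    have "B $$ (i,i) \<in> set es" using dg i B unfolding diag_mat_def by auto
    hence "poly (char_poly Ac) (B $$ (i,i)) = 0" unfolding es by (rule poly_prod_root)
    hence "eigenvalue Ac (B $$ (i,i))" using eigenvalue_root_char_poly[OF Ac] by simp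
    thus ?thesis using h unfolding hurwitz_def Ac_def by auto
  qed
  obtain \<epsilon> :: real where e: "\<epsilon> > 0" and key: "\<And>z. z \<in> carrier_vec n \<Longrightarrow> z \<noteq> 0\<^sub>v n \<Longrightarrow>
     Re (conjugate z \<bullet> (mat n n (\<lambda>(i,j). B $$ (i,j) * of_real (\<epsilon>^(j-i))) *\<^sub>v z)) < 0"
    using tri_neg[OF B ut dneg] by blast
  define Be where "Be = mat n n (\<lambda>(i,j). B $$ (i,j) * of_real (\<epsilon>^(j-i)))"
  define D where "D = mat_diag n (\<lambda>i. complex_of_real (\<epsilon>^i))"
  define Di where "Di = mat_diag n (\<lambda>i. complex_of_real (inverse (\<epsilon>^i)))"
  have D: "D \<in> carrier_mat n n" and Di: "Di \<in> carrier_mat n n" unfolding D_def Di_def by auto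
  have DDi: "D * Di = 1\<^sub>m n" unfolding D_def Di_def mat_diag_diag using e
    by (simp add: of_real_mult[symmetric] del: of_real_mult)
  have DiD: "Di * D = 1\<^sub>m n" unfolding D_def Di_def mat_diag_diag using e
    by (simp add: of_real_mult[symmetric] del: of_real_mult)
  have DiBD: "Di * B * D = Be"
  proof -
    have "Di * B = mat n n (\<lambda>(i,j). complex_of_real (inverse (\<epsilon>^i)) * B $$ (i,j))"
      unfolding Di_def by (rule mat_diag_mult_left[OF B])
    hence "Di * B * D = mat n n (\<lambda>(i,j). complex_of_real (inverse (\<epsilon>^i)) * B $$ (i,j) * complex_of_real (\<epsilon>^j))"
      unfolding D_def by (subst mat_diag_mult_right[of _ n], auto)
    also have "\<dots> = Be"
    proof (rule eq_matI)
      fix i j assume i: "i < dim_row Be" and j: "j < dim_col Be"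
      hence i: "i < n" and j: "j < n" unfolding Be_def by auto
      show "mat n n (\<lambda>(i,j). complex_of_real (inverse (\<epsilon>^i)) * B $$ (i,j) * complex_of_real (\<epsilon>^j)) $$ (i,j) =
        Be $$ (i,j)"
      proof (cases "j < i")
        case True
        hence "B $$ (i,j) = 0" using ut B i unfolding upper_triangular_def by auto
        thus ?thesis using i j by (simp add: Be_def)
      next
        case False
        hence "\<epsilon>^j = \<epsilon>^i * \<epsilon>^(j-i)" by (simp add: power_add[symmetric])
        hence "inverse (\<epsilon>^i) * \<epsilon>^j = \<epsilon>^(j-i)" using e by simp
        hence "complex_of_real (inverse (\<epsilon>^i)) * complex_of_real (\<epsilon>^j) = of_real (\<epsilon>^(j-i))"
          by (metis of_real_mult)
        thus ?thesis using i j by (simp add: algebra_simps Be_def)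
      qed
    qed (auto simp: Be_def)
    finally show ?thesis .
  qed
  define S where "S = P * D"
  define R where "R = Di * Q"
  have S: "S \<in> carrier_mat n n" and R: "R \<in> carrier_mat n n" and Be: "Be \<in> carrier_mat n n"
    unfolding S_def R_def Be_def using P D Di Q by auto
  have RS: "R * S = 1\<^sub>m n"
  proof -
    have "R * S = Di * (Q * P) * D" unfolding R_def S_def using Di Q P D
      by (simp add: assoc_mult_mat[of _ n n _ n _ n])
    thus ?thesis unfolding QP using Di D DiD by simp
  qed
  have SR: "S * R = 1\<^sub>m n"
  proof -
    have "S * R = P * (D * Di) * Q" unfolding R_def S_def using Di Q P D
      by (simp add: assoc_mult_mat[of _ n n _ n _ n])
    thus ?thesis unfolding DDi using P Q PQ by simp
  qed
  have RAc: "R * Ac = Be * R"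
  proof -
    have "Ac = P * (D * Di) * B * (D * Di) * Q" unfolding DDi AcPBQ using P B by simp
    also have "\<dots> = S * (Di * B * D) * R" unfolding S_def R_def using P D Di B Q
      by (simp add: assoc_mult_mat[of _ n n _ n _ n])
    finally have "R * Ac = (R * S) * Be * R" unfolding DiBD using R S Be
      by (simp add: assoc_mult_mat[of _ n n _ n _ n])
    thus ?thesis unfolding RS using Be R by simp
  qed
  define Rh where "Rh = (map_mat cnj R)\<^sup>T"
  have Rh: "Rh \<in> carrier_mat n n" using R unfolding Rh_def by auto
  define H where "H = Rh * R"
  have H: "H \<in> carrier_mat n n" using Rh R unfolding H_def by auto
  define X where "X = map_mat Re H"
  have X: "X \<in> carrier_mat n n" using H unfolding X_def by auto
  have Rinj: "R *\<^sub>v y \<noteq> 0\<^sub>v n" if y: "y \<in> carrier_vec n" "y \<noteq> 0\<^sub>v n" for y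
  proof
    assume "R *\<^sub>v y = 0\<^sub>v n"
    hence "S *\<^sub>v (R *\<^sub>v y) = 0\<^sub>v n" using S by (auto intro!: eq_vecI simp: scalar_prod_def)
    moreover have "S *\<^sub>v (R *\<^sub>v y) = y" using assoc_mult_mat_vec[OF S R y(1), symmetric] SR y by simp
    ultimately show False using y by simp
  qed
  have P1: "conjugate y \<bullet> (H *\<^sub>v y) > 0" if y: "y \<in> carrier_vec n" "y \<noteq> 0\<^sub>v n" for y
  proof -
    have Ry: "R *\<^sub>v y \<in> carrier_vec n" using R y by simp
    have "conjugate y \<bullet> (H *\<^sub>v y) = conjugate y \<bullet> (Rh *\<^sub>v (R *\<^sub>v y))"
      unfolding H_def using Rh R y by (simp add: assoc_mult_mat_vec)
    also have "\<dots> = conjugate (R *\<^sub>v y) \<bullet> (R *\<^sub>v y)" unfolding Rh_def by (rule adj[OF R y(1) Ry])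
    also have "\<dots> = (R *\<^sub>v y) \<bullet>c (R *\<^sub>v y)" using conjugate_vec_sprod_comm[OF Ry Ry] by simp
    finally show ?thesis using Rinj[OF y] Ry by simp
  qed
  have P2: "Re (conjugate y \<bullet> ((H * Ac) *\<^sub>v y)) < 0" if y: "y \<in> carrier_vec n" "y \<noteq> 0\<^sub>v n" for y
  proof -
    have Ry: "R *\<^sub>v y \<in> carrier_vec n" using R y by simp
    have "(H * Ac) *\<^sub>v y = Rh *\<^sub>v ((R * Ac) *\<^sub>v y)"
    proof -
      have "H * Ac = Rh * (R * Ac)" unfolding H_def by (rule assoc_mult_mat[OF Rh R Ac])
      thus ?thesis using assoc_mult_mat_vec[of Rh n n "R * Ac" n y] Rh R Ac y by simp
    qed
    also have "(R * Ac) *\<^sub>v y = Be *\<^sub>v (R *\<^sub>v y)" unfolding RAc using Be R y by (simp add: assoc_mult_mat_vec)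
    finally have "conjugate y \<bullet> ((H * Ac) *\<^sub>v y) = conjugate y \<bullet> (Rh *\<^sub>v (Be *\<^sub>v (R *\<^sub>v y)))" by simp
    also have "\<dots> = conjugate (R *\<^sub>v y) \<bullet> (Be *\<^sub>v (R *\<^sub>v y))" unfolding Rh_def
      by (rule adj[OF R y(1)], insert Be Ry, simp)
    finally show ?thesis using key[OF Ry Rinj[OF y]] unfolding Be_def by simp
  qed
  show ?thesis
  proof (intro exI[of _ X] conjI ballI impI X)
    show "X\<^sup>T = X"
    proof (rule eq_matI)
      fix i j assume i: "i < dim_row X" and j: "j < dim_col X"
      hence i: "i < n" and j: "j < n" using X by auto
      have "H $$ (j,i) = cnj (H $$ (i,j))" unfolding H_def Rh_def using R i j
        by (simp add: scalar_prod_def cnj_sum mult.commute)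
      thus "X\<^sup>T $$ (i, j) = X $$ (i, j)" unfolding X_def using H i j by simp
    qed (insert X, auto)
  next
    fix y :: "complex vec" assume y: "y \<in> carrier_vec n" and y0: "y \<noteq> 0\<^sub>v n"
    have cy: "conjugate y \<in> carrier_vec n" "conjugate y \<noteq> 0\<^sub>v n" using y y0 by auto
    have a: "conjugate y \<bullet> (H *\<^sub>v y) > 0" by (rule P1[OF y y0])
    have b: "conjugate (conjugate y) \<bullet> (H *\<^sub>v conjugate y) > 0" by (rule P1[OF cy])
    show "conjugate y \<bullet> (cm X *\<^sub>v y) > 0" unfolding X_def qf_re[OF H y]
      using a b by (auto simp: less_complex_def)
    have a': "Re (conjugate y \<bullet> ((H * Ac) *\<^sub>v y)) < 0" by (rule P2[OF y y0])
    have b': "Re (conjugate (conjugate y) \<bullet> ((H * Ac) *\<^sub>v conjugate y)) < 0" by (rule P2[OF cy])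
    have "cm X *\<^sub>v (cm A *\<^sub>v y) = cm (X * A) *\<^sub>v y"
      using X A y by (simp add: assoc_mult_mat_vec of_real_hom.mat_hom_mult)
    also have "X * A = map_mat Re (H * Ac)" unfolding X_def Ac_def by (rule re_mult[OF H A])
    finally have "conjugate y \<bullet> (cm X *\<^sub>v (cm A *\<^sub>v y)) = conjugate y \<bullet> (cm (map_mat Re (H * Ac)) *\<^sub>v y)" by simp
    also have "\<dots> = (conjugate y \<bullet> ((H * Ac) *\<^sub>v y) + cnj (y \<bullet> ((H * Ac) *\<^sub>v conjugate y))) / 2"
      by (rule qf_re, insert H Ac y, auto)
    finally have eq: "conjugate y \<bullet> (cm X *\<^sub>v (cm A *\<^sub>v y)) = (conjugate y \<bullet> ((H * Ac) *\<^sub>v y) + cnj (y \<bullet> ((H * Ac) *\<^sub>v conjugate y))) / 2" .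
    have "Re (conjugate y \<bullet> (cm X *\<^sub>v (cm A *\<^sub>v y))) = (Re (conjugate y \<bullet> ((H * Ac) *\<^sub>v y)) + Re (y \<bullet> ((H * Ac) *\<^sub>v conjugate y))) / 2"
      unfolding eq by simp
    thus "Re (conjugate y \<bullet> (cm X *\<^sub>v (cm A *\<^sub>v y))) < 0" using a' b' by simp
  qed
qed



lemma real_pos:
  fixes X :: "real mat"
  assumes X: "X \<in> carrier_mat n n"
    and pos: "\<And>y. y \<in> carrier_vec n \<Longrightarrow> y \<noteq> 0\<^sub>v n \<Longrightarrow> conjugate y \<bullet> (cm X *\<^sub>v y) > 0"
    and x: "x \<in> carrier_vec n" and x0: "x \<noteq> 0\<^sub>v n"
  shows "x \<bullet> (X *\<^sub>v x) > 0"
proof -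
  define y where "y = map_vec complex_of_real x"
  have y: "y \<in> carrier_vec n" using x by (simp add: y_def)
  have y0: "y \<noteq> 0\<^sub>v n"
  proof
    assume "y = 0\<^sub>v n"
    hence "x = 0\<^sub>v n" using x unfolding y_def by (intro eq_vecI, auto simp: vec_eq_iff)
    thus False using x0 by simp
  qed
  have "conjugate y \<bullet> (cm X *\<^sub>v y) = complex_of_real (x \<bullet> (X *\<^sub>v x))"
    using X x unfolding y_def by (simp add: scalar_prod_def mult_mat_vec_def)
  thus ?thesis using pos[OF y y0] by (simp add: less_complex_def)
qed

lemma gram_inj:
  fixes X M :: "real mat"
  assumes X: "X \<in> carrier_mat n n" and M: "M \<in> carrier_mat n k"
    and xpos: "\<And>x. x \<in> carrier_vec n \<Longrightarrow> x \<noteq> 0\<^sub>v n \<Longrightarrow> x \<bullet> (X *\<^sub>v x) > 0"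
    and inj: "\<And>a. a \<in> carrier_vec k \<Longrightarrow> M *\<^sub>v a = 0\<^sub>v n \<Longrightarrow> a = 0\<^sub>v k"
    and a: "a \<in> carrier_vec k" and z: "(M\<^sup>T * X * M) *\<^sub>v a = 0\<^sub>v k"
  shows "a = 0\<^sub>v k"
proof -
  have Ma: "M *\<^sub>v a \<in> carrier_vec n" using M a by simp
  have XMa: "X *\<^sub>v (M *\<^sub>v a) \<in> carrier_vec n" using X Ma by simp
  have "(M\<^sup>T * X * M) *\<^sub>v a = (M\<^sup>T * X) *\<^sub>v (M *\<^sub>v a)"
    by (rule assoc_mult_mat_vec, insert M X a, auto)
  also have "\<dots> = M\<^sup>T *\<^sub>v (X *\<^sub>v (M *\<^sub>v a))"
    by (rule assoc_mult_mat_vec, insert M X a, auto)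
  finally have "(M\<^sup>T * X * M) *\<^sub>v a = M\<^sup>T *\<^sub>v (X *\<^sub>v (M *\<^sub>v a))" .
  hence e: "M\<^sup>T *\<^sub>v (X *\<^sub>v (M *\<^sub>v a)) = 0\<^sub>v k" using z by simp
  have "a \<bullet> (M\<^sup>T *\<^sub>v (X *\<^sub>v (M *\<^sub>v a))) = 0" unfolding e using a by simp
  moreover have "a \<bullet> (M\<^sup>T *\<^sub>v (X *\<^sub>v (M *\<^sub>v a))) = (M *\<^sub>v a) \<bullet> (X *\<^sub>v (M *\<^sub>v a))"
  proof -
    have "a \<bullet> (M\<^sup>T *\<^sub>v (X *\<^sub>v (M *\<^sub>v a))) = (M\<^sup>T *\<^sub>v (X *\<^sub>v (M *\<^sub>v a))) \<bullet> a"
      by (rule comm_scalar_prod[OF a], insert M XMa, simp)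
    also have "\<dots> = (X *\<^sub>v (M *\<^sub>v a)) \<bullet> (M *\<^sub>v a)" by (rule transpose_vec_mult_scalar[OF M a XMa])
    also have "\<dots> = (M *\<^sub>v a) \<bullet> (X *\<^sub>v (M *\<^sub>v a))" by (rule comm_scalar_prod[OF XMa Ma])
    finally show ?thesis .
  qed
  ultimately have "(M *\<^sub>v a) \<bullet> (X *\<^sub>v (M *\<^sub>v a)) = 0" by simp
  hence "M *\<^sub>v a = 0\<^sub>v n" using xpos[OF Ma] by force
  thus ?thesis by (rule inj[OF a])
qed

theorem lemma2:
  fixes A L :: "real mat" and n m :: nat
  assumes "A \<in> carrier_mat n n" and "hurwitz A"
    and "L \<in> carrier_mat n m" and "vec_space.rank n L = m"
  shows "\<exists>k P Pd Pb Pbd.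
    P \<in> carrier_mat k n \<and> Pd \<in> carrier_mat n k \<and>
    Pb \<in> carrier_mat m n \<and> Pbd \<in> carrier_mat n m \<and>
    P * Pd = 1\<^sub>m k \<and> Pb * Pbd = 1\<^sub>m m \<and>
    Pd * P + Pbd * Pb = 1\<^sub>m n \<and>
    hurwitz (P * A * Pd) \<and> hurwitz (Pb * A * Pbd) \<and>
    P * L = 0\<^sub>m k m \<and> invertible_mat (Pb * L)"
proof -
  note A = assms(1) and L = assms(3)
  obtain X where X: "X \<in> carrier_mat n n" and XT: "X\<^sup>T = X"
    and pos: "\<And>y. y\<in>carrier_vec n \<Longrightarrow> y \<noteq> 0\<^sub>v n \<Longrightarrow> conjugate y \<bullet> (cm X *\<^sub>v y) > 0"
    and neg: "\<And>y. y\<in>carrier_vec n \<Longrightarrow> y \<noteq> 0\<^sub>v n \<Longrightarrow> Re (conjugate y \<bullet> (cm X *\<^sub>v (cm A *\<^sub>v y))) < 0"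
    using lyap[OF assms(1,2)] by blast
  have xpos: "\<And>x. x \<in> carrier_vec n \<Longrightarrow> x \<noteq> 0\<^sub>v n \<Longrightarrow> x \<bullet> (X *\<^sub>v x) > 0"
    by (rule real_pos[OF X pos])
  have Linj: "\<And>b. b \<in> carrier_vec m \<Longrightarrow> L *\<^sub>v b = 0\<^sub>v n \<Longrightarrow> b = 0\<^sub>v m"
    by (rule L_inj[OF L assms(4)])
  define WL where "WL = L\<^sup>T * X * L"
  have WL: "WL \<in> carrier_mat m m" unfolding WL_def using L X by auto
  obtain WLi where WLi: "WLi \<in> carrier_mat m m" and WLWLi: "WL * WLi = 1\<^sub>m m" and WLiWL: "WLi * WL = 1\<^sub>m m"
    using inv_exists[OF WL gram_inj[OF X L xpos Linj, folded WL_def]] by blast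
  define M where "M = L\<^sup>T * X"
  have M: "M \<in> carrier_mat m n" unfolding M_def using L X by auto
  obtain k V where V: "V \<in> carrier_mat n k" and MV: "M * V = 0\<^sub>m m k"
    and Vinj: "\<forall>a \<in> carrier_vec k. V *\<^sub>v a = 0\<^sub>v n \<longrightarrow> a = 0\<^sub>v k"
    and Vsp: "\<forall>u \<in> carrier_vec n. M *\<^sub>v u = 0\<^sub>v m \<longrightarrow> (\<exists>a \<in> carrier_vec k. u = V *\<^sub>v a)"
    using kernel_V[OF M] by blast
  define W where "W = V\<^sup>T * X * V"
  have W: "W \<in> carrier_mat k k" unfolding W_def using V X by auto
  obtain Wi where Wi: "Wi \<in> carrier_mat k k" and WWi: "W * Wi = 1\<^sub>m k" and WiW: "Wi * W = 1\<^sub>m k"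
    using inv_exists[OF W gram_inj[OF X V xpos, folded W_def]] Vinj by blast
  define P where "P = Wi * V\<^sup>T * X"
  define Pb where "Pb = WLi * L\<^sup>T * X"
  have P: "P \<in> carrier_mat k n" unfolding P_def using Wi V X by auto
  have Pb: "Pb \<in> carrier_mat m n" unfolding Pb_def using WLi L X by auto
  have VTXL: "V\<^sup>T * X * L = 0\<^sub>m k m"
  proof -
    have "(M * V)\<^sup>T = V\<^sup>T * M\<^sup>T" by (rule transpose_mult[OF M V])
    also have "M\<^sup>T = X\<^sup>T * L\<^sup>T\<^sup>T" unfolding M_def by (rule transpose_mult, insert L X, auto)
    also have "\<dots> = X * L" using XT by simp
    also have "V\<^sup>T * (X * L) = V\<^sup>T * X * L" by (rule assoc_mult_mat[symmetric], insert V X L, auto)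
    finally have "(M * V)\<^sup>T = V\<^sup>T * X * L" .
    thus ?thesis unfolding MV by simp
  qed
  have PPd: "P * V = 1\<^sub>m k"
  proof -
    have "P * V = Wi * W" unfolding P_def W_def using Wi V X
      by (simp add: assoc_mult_mat[of _ k k _ n _ k] assoc_mult_mat[of _ k n _ n _ k])
    thus ?thesis using WiW by simp
  qed
  have PbL: "Pb * L = 1\<^sub>m m"
  proof -
    have "Pb * L = WLi * WL" unfolding Pb_def WL_def using WLi L X
      by (simp add: assoc_mult_mat[of _ m m _ n _ m] assoc_mult_mat[of _ m n _ n _ m])
    thus ?thesis using WLiWL by simp
  qed
  have PL: "P * L = 0\<^sub>m k m"
  proof -
    have "P * L = Wi * (V\<^sup>T * X * L)" unfolding P_def using Wi V X L
      by (simp add: assoc_mult_mat[of _ k k _ n _ m] assoc_mult_mat[of _ k n _ n _ m])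
    thus ?thesis unfolding VTXL using Wi by simp
  qed
  have Z: "V * P + L * Pb = 1\<^sub>m n"
  proof (rule mat_eq_vec[of _ n n])
    show "V * P + L * Pb \<in> carrier_mat n n" using V P L Pb by auto
    show "1\<^sub>m n \<in> carrier_mat n n" by simp
    fix x :: "real vec" assume x: "x \<in> carrier_vec n"
    define c where "c = Pb *\<^sub>v x"
    have c: "c \<in> carrier_vec m" unfolding c_def using Pb x by simp
    define u where "u = x - L *\<^sub>v c"
    have u: "u \<in> carrier_vec n" unfolding u_def using x L c by simp
    have Mx: "M *\<^sub>v x = WL *\<^sub>v c"
    proof -
      have Pbx: "Pb = WLi * M" unfolding Pb_def M_def by (rule assoc_mult_mat[OF WLi], insert L X, auto)
      have "WL *\<^sub>v c = WL *\<^sub>v (WLi *\<^sub>v (M *\<^sub>v x))" unfolding c_def Pbx using assoc_mult_mat_vec[OF WLi M x] by simp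
      also have "\<dots> = (WL * WLi) *\<^sub>v (M *\<^sub>v x)" by (rule assoc_mult_mat_vec[symmetric, OF WL WLi], insert M x, simp)
      finally show ?thesis unfolding WLWLi using M x by simp
    qed
    have "M *\<^sub>v u = M *\<^sub>v x - M *\<^sub>v (L *\<^sub>v c)" unfolding u_def using M x L c
      by (simp add: mult_minus_distrib_mat_vec)
    also have "M *\<^sub>v (L *\<^sub>v c) = WL *\<^sub>v c" unfolding WL_def M_def[symmetric]
      by (rule assoc_mult_mat_vec[symmetric, OF M L c])
    finally have "M *\<^sub>v u = 0\<^sub>v m" unfolding Mx using WL c by simp
    then obtain a where a: "a \<in> carrier_vec k" and ua: "u = V *\<^sub>v a" using Vsp u by blast
    have xa: "x = V *\<^sub>v a + L *\<^sub>v c" using u_def ua x L c by auto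
    have "P *\<^sub>v x = P *\<^sub>v (V *\<^sub>v a) + P *\<^sub>v (L *\<^sub>v c)" unfolding xa using P V L a c
      by (simp add: mult_add_distrib_mat_vec)
    also have "P *\<^sub>v (V *\<^sub>v a) = a" using PPd P V a by (simp add: assoc_mult_mat_vec[symmetric])
    also have "P *\<^sub>v (L *\<^sub>v c) = 0\<^sub>v k" using PL P L c by (simp add: assoc_mult_mat_vec[symmetric], intro eq_vecI, auto simp: scalar_prod_def)
    finally have Px: "P *\<^sub>v x = a" using a by simp
    have s1: "(V * P + L * Pb) *\<^sub>v x = (V * P) *\<^sub>v x + (L * Pb) *\<^sub>v x"
      by (rule add_mult_distrib_mat_vec[of _ n n], insert V P L Pb x, auto)
    have s2: "(V * P) *\<^sub>v x = V *\<^sub>v (P *\<^sub>v x)" by (rule assoc_mult_mat_vec[OF V P x])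
    have s3: "(L * Pb) *\<^sub>v x = L *\<^sub>v (Pb *\<^sub>v x)" by (rule assoc_mult_mat_vec[OF L Pb x])
    have "(V * P + L * Pb) *\<^sub>v x = x" unfolding s1 s2 s3 Px c_def[symmetric] by (rule xa[symmetric])
    thus "(V * P + L * Pb) *\<^sub>v x = 1\<^sub>m n *\<^sub>v x" using x by simp
  qed
  have H1: "hurwitz (P * A * V)" unfolding P_def
    by (rule compress[OF X A V Wi WWi[unfolded W_def]], insert Vinj pos neg, auto)
  have H2: "hurwitz (Pb * A * L)" unfolding Pb_def
    by (rule compress[OF X A L WLi WLWLi[unfolded WL_def]], insert Linj pos neg, auto)
  have inv: "invertible_mat (Pb * L)" unfolding PbL invertible_mat_def inverts_mat_def
    by (intro conjI exI[of _ "1\<^sub>m m"], auto)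
  show ?thesis
    by (intro exI[of _ k] exI[of _ P] exI[of _ V] exI[of _ Pb] exI[of _ L] conjI P V Pb L PPd PbL Z H1 H2 PL inv)
qed


end
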